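(* Let $u_*>0$ be a positive solution of $n^{-1}\mathrm{Tr}\,G(u_*^2)=1$, and let $\tilde F(t)=-\mathcal L_n(-t^2)-t^2$. Then one can choose a sufficiently small $0<\kappa<u_*$ and a sufficiently large $C_0$ with $\log C_0^2>\mathcal L_n(0)+2$ such that there exist a contour $L_1\subset\{t:\Re t>0,\ \arg t\ge\pi/4\}$ and a constant $\sigma>0$ (depending on $L_1$) with $$iu_*+\kappa\in L_1,\qquad iC_0+C_0\in L_1,\qquad \Re\tilde F(t)\le\Re\tilde F(iu_* )-\sigma\quad\text{for } t\in L_1.$$
   Context: $A_0$ is a fixed $n\times n$ complex matrix and $z\in\mathbb C$; $Y_0(z)=(A_0-z)(A_0-z)^*$, $G(x)=(Y_0(z)+x)^{-1}$, $\mathcal L_n(x)=n^{-1}\log\det(Y_0(z)+x)$, where for $t$ in the upper half-plane $\mathcal L_n(-t^2)$ is defined by analytic continuation (so that $\Re\mathcal L_n(-t^2)=\frac12\int\log|\lambda-t^2|^2\,d\nu_{n,z}(\lambda)$, with $\nu_{n,z}$ the normalized eigenvalue counting measure of $Y_0(z)$). It is assumed that a positive solution $u_*$ of $n^{-1}\mathrm{Tr}\,G(u_*^2)=1$ exists. *)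

theory Defs
  imports "HOL-Complex_Analysis.Complex_Analysis"
begin

definition cadj :: "complex^'n^'n \<Rightarrow> complex^'n^'n" where
  "cadj M = (\<chi> i j. cnj (M $ j $ i))"

definition Y0 :: "complex^'n^'n \<Rightarrow> complex \<Rightarrow> complex^'n^'n" where
  "Y0 A z = (A - mat z) ** cadj (A - mat z)"

definition Gres :: "complex^'n^'n \<Rightarrow> complex \<Rightarrow> complex \<Rightarrow> complex^'n^'n" where
  "Gres A z x = matrix_inv (Y0 A z + mat x)"

text \<open>Real part of the (analytically continued) L_n(w) = n^{-1} log det (Y_0(z) + w),
  namely n^{-1} ln |det (Y_0(z) + w)| (valid whenever the determinant is nonzero).\<close>
definition ReLn :: "complex^'n^'n \<Rightarrow> complex \<Rightarrow> complex \<Rightarrow> real" where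
  "ReLn A z w = ln (cmod (det (Y0 A z + mat w))) / real CARD('n)"

definition ReFt :: "complex^'n^'n \<Rightarrow> complex \<Rightarrow> complex \<Rightarrow> real" where
  "ReFt A z t = - ReLn A z (- (t^2)) - Re (t^2)"

end

theory Submission
  imports Defs "HOL-Computational_Algebra.Fundamental_Theorem_Algebra"
begin

lemma mat_nth: "(mat v :: complex^'n^'n) $ i $ j = (if i = j then v else 0)"
  by (simp add: mat_def)

lemma axis_nth1: "(axis k (1::complex) :: complex^'n) $ i = (if i = k then 1 else 0)"
  by (simp add: axis_def)

lemma mat_add_nth: "((M::complex^'n^'n) + mat v) $ i $ j = M$i$j + (if i = j then v else 0)"
  by (simp add: mat_def)

definition detpoly :: "complex^'n^'n \<Rightarrow> complex poly" where
 "detpoly M = (\<Sum>p | p permutes (UNIV::'n set). smult (of_int (sign p)) (\<Prod>i\<in>UNIV. [:M$i$p i, if i = p i then 1 else 0:]))"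

lemma poly_detpoly: "poly (detpoly M) v = det (M + mat v)"
  by (auto simp add: detpoly_def det_def poly_sum poly_prod mat_nth intro!: sum.cong prod.cong)

lemma det_deriv:
  fixes M :: "complex^'n^'n"
  shows "((\<lambda>v. det (M + mat v)) has_field_derivative
     (\<Sum>k\<in>UNIV. det ((\<chi> i j. if i = k then (if j = k then 1 else 0) else (M + mat v)$i$j)::complex^'n^'n))) (at v)"
proof -
  let ?f = "\<lambda>p i v. M$i$p i + (if i = p i then v else (0::complex))"
  have fun_eq: "(\<lambda>v. det (M + mat v)) = (\<lambda>v. \<Sum>p | p permutes (UNIV::'n set). of_int (sign p) * (\<Prod>i\<in>UNIV. ?f p i v))"
    by (simp add: det_def mat_nth)
  have D: "((\<lambda>v. \<Sum>p | p permutes (UNIV::'n set). of_int (sign p) * (\<Prod>i\<in>UNIV. ?f p i v)) has_field_derivative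
      (\<Sum>p | p permutes (UNIV::'n set). of_int (sign p) * (\<Sum>x\<in>UNIV. (if x = p x then 1 else 0) * (\<Prod>y\<in>UNIV-{x}. ?f p y v)))) (at v)"
    apply (intro DERIV_sum DERIV_cmult has_field_derivative_prod)
    apply (auto intro!: derivative_eq_intros)
    done
  have E: "(\<Sum>p | p permutes (UNIV::'n set). of_int (sign p) * (\<Sum>x\<in>UNIV. (if x = p x then 1 else 0) * (\<Prod>y\<in>UNIV-{x}. ?f p y v)))
     = (\<Sum>k\<in>UNIV. det ((\<chi> i j. if i = k then (if j = k then 1 else 0) else (M + mat v)$i$j)::complex^'n^'n))"
  proof -
    have "\<And>p k. (if k = p k then 1 else 0) * (\<Prod>y\<in>UNIV-{k}. ?f p y v)
        = (\<Prod>i\<in>UNIV. ((\<chi> i j. if i = k then (if j = k then 1 else 0) else (M + mat v)$i$j)::complex^'n^'n) $ i $ p i)"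
    proof -
      fix p k
      define R where "R = ((\<chi> i j. if i = k then (if j = k then 1 else 0) else (M + mat v)$i$j)::complex^'n^'n)"
      have "(\<Prod>i\<in>UNIV. R $ i $ p i) = R $ k $ p k * (\<Prod>i\<in>UNIV-{k}. R $ i $ p i)"
        using prod.remove[of UNIV k "\<lambda>i. R $ i $ p i"] by simp
      also have "\<dots> = (if k = p k then 1 else 0) * (\<Prod>y\<in>UNIV-{k}. ?f p y v)"
        unfolding R_def by (auto intro!: prod.cong simp: mat_nth)
      finally show "(if k = p k then 1 else 0) * (\<Prod>y\<in>UNIV-{k}. ?f p y v)
        = (\<Prod>i\<in>UNIV. ((\<chi> i j. if i = k then (if j = k then 1 else 0) else (M + mat v)$i$j)::complex^'n^'n) $ i $ p i)"
        unfolding R_def by simp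
    qed
    then show ?thesis
      unfolding det_def sum_distrib_left
      by (subst sum.swap) (simp add: mult.assoc)
  qed
  show ?thesis using D unfolding fun_eq E .
qed

lemma matrix_inv_right':
  fixes N :: "complex^'n^'n"
  assumes "det N \<noteq> 0" shows "N ** matrix_inv N = mat 1"
proof -
  have "invertible N" using assms invertible_det_nz by blast
  then have "\<exists>A'. N ** A' = mat 1 \<and> A' ** N = mat 1" unfolding invertible_def .
  then show ?thesis unfolding matrix_inv_def by (rule someI2_ex) auto
qed

lemma inv_diag:
  fixes N :: "complex^'n^'n"
  assumes "det N \<noteq> 0"
  shows "matrix_inv N $ k $ k = det ((\<chi> i j. if j = k then (if i = k then 1 else 0) else N$i$j)::complex^'n^'n) / det N"
proof -
  let ?b = "axis k (1::complex) :: complex^'n"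
  have "N *v (matrix_inv N *v ?b) = ?b"
    by (simp add: matrix_vector_mul_assoc matrix_inv_right'[OF assms])
  then have "matrix_inv N *v ?b = (\<chi> k. det(\<chi> i j. if j=k then ?b$i else N$i$j) / det N)"
    using cramer[OF assms] by blast
  then have "(matrix_inv N *v ?b) $ k = det((\<chi> i j. if j=k then ?b$i else N$i$j)::complex^'n^'n) / det N"
    by simp
  moreover have "(matrix_inv N *v ?b) $ k = matrix_inv N $ k $ k"
    by (simp add: matrix_vector_mult_def axis_def if_distrib cong: if_cong)
  moreover have "((\<chi> i j. if j = k then ?b$i else N$i$j)::complex^'n^'n) = (\<chi> i j. if j = k then (if i = k then 1 else 0) else N$i$j)"
    by (simp add: vec_eq_iff axis_def)
  ultimately show ?thesis by simp
qed

lemma trace_inv_deriv: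
  fixes M :: "complex^'n^'n"
  assumes "det (M + mat v) \<noteq> 0"
  shows "((\<lambda>v. det (M + mat v)) has_field_derivative (trace (matrix_inv (M + mat v)) * det (M + mat v))) (at v)"
proof -
  have fe: "(\<lambda>v. det (M + mat v)) = (\<lambda>v. det (transpose M + mat v))"
  proof
    fix w
    have "transpose M + mat w = transpose (M + mat w)"
      by (simp add: transpose_def mat_def vec_eq_iff)
    then show "det (M + mat w) = det (transpose M + mat w)" by simp
  qed
  have "\<And>k. det ((\<chi> i j. if j = k then (if i = k then 1 else 0) else (M + mat v)$i$j)::complex^'n^'n)
     = det ((\<chi> i j. if i = k then (if j = k then 1 else 0) else (transpose M + mat v)$i$j)::complex^'n^'n)"
  proof -
    fix k
    have "((\<chi> i j. if i = k then (if j = k then 1 else 0) else (transpose M + mat v)$i$j)::complex^'n^'n)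
      = transpose ((\<chi> i j. if j = k then (if i = k then 1 else 0) else (M + mat v)$i$j)::complex^'n^'n)"
      by (simp add: transpose_def mat_def vec_eq_iff)
    then show "det ((\<chi> i j. if j = k then (if i = k then 1 else 0) else (M + mat v)$i$j)::complex^'n^'n)
     = det ((\<chi> i j. if i = k then (if j = k then 1 else 0) else (transpose M + mat v)$i$j)::complex^'n^'n)"
      by simp
  qed
  then have "trace (matrix_inv (M + mat v)) * det (M + mat v) =
     (\<Sum>k\<in>UNIV. det ((\<chi> i j. if i = k then (if j = k then 1 else 0) else (transpose M + mat v)$i$j)::complex^'n^'n))"
    using assms by (simp add: trace_def inv_diag sum_distrib_right)
  then show ?thesis unfolding fe using det_deriv[of "transpose M" v] by simp
qed

lemma det_zero_kernel:
  fixes A :: "complex^'n^'n"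
  assumes "det A = 0" shows "\<exists>x. x \<noteq> 0 \<and> A *v x = 0"
proof -
  have "\<not> invertible A" using assms invertible_det_nz by blast
  then have "\<not> (\<exists>B. B ** A = mat 1)" using invertible_left_inverse by blast
  then show ?thesis using matrix_left_invertible_ker by blast
qed

lemma quad_form:
  fixes N :: "complex^'n^'n" and x :: "complex^'n"
  shows "(\<Sum>i\<in>UNIV. cnj (x$i) * ((N ** cadj N) *v x)$i) = (\<Sum>k\<in>UNIV. cnj ((cadj N *v x)$k) * (cadj N *v x)$k)"
proof -
  have "(\<Sum>i\<in>UNIV. cnj (x$i) * ((N ** cadj N) *v x)$i) = (\<Sum>i\<in>UNIV. \<Sum>j\<in>UNIV. \<Sum>k\<in>UNIV. cnj (x$i) * N$i$k * cnj (N$j$k) * x$j)"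
    unfolding cadj_def matrix_matrix_mult_def matrix_vector_mult_def
    by (simp add: sum_distrib_left sum_distrib_right mult_ac)
  also have "\<dots> = (\<Sum>i\<in>UNIV. \<Sum>k\<in>UNIV. \<Sum>j\<in>UNIV. cnj (x$i) * N$i$k * cnj (N$j$k) * x$j)"
    by (intro sum.cong refl sum.swap)
  also have "\<dots> = (\<Sum>k\<in>UNIV. \<Sum>i\<in>UNIV. \<Sum>j\<in>UNIV. cnj (x$i) * N$i$k * cnj (N$j$k) * x$j)"
    by (rule sum.swap)
  also have "\<dots> = (\<Sum>k\<in>UNIV. cnj ((cadj N *v x)$k) * (cadj N *v x)$k)"
    unfolding cadj_def matrix_vector_mult_def
    by (simp add: sum_distrib_left sum_distrib_right mult_ac cnj_sum)
  finally show ?thesis .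
qed

lemma Y0_sing:
  fixes A :: "complex^'n^'n"
  assumes "det (Y0 A z + mat v) = 0"
  shows "\<exists>r\<ge>0. v = - complex_of_real r"
proof -
  obtain x where x: "x \<noteq> 0" "(Y0 A z + mat v) *v x = 0" using det_zero_kernel[OF assms] by blast
  define N where "N = A - mat z"
  define y where "y = cadj N *v x"
  have Y: "Y0 A z = N ** cadj N" unfolding Y0_def N_def ..
  have "(\<Sum>i\<in>UNIV. cnj (x$i) * ((Y0 A z + mat v) *v x)$i) = 0" using x by simp
  moreover have "((Y0 A z + mat v) *v x) = (N ** cadj N) *v x + v *s x"
  proof -
    have mv: "(mat v :: complex^'n^'n) *v x = v *s x"
    proof -
      have "\<And>i. (\<Sum>j\<in>UNIV. (if i = j then v else 0) * x$j) = v * x$i"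
      proof -
        fix i
        have "(\<Sum>j\<in>UNIV. (if i = j then v else 0) * x$j) = (\<Sum>j\<in>UNIV. if i = j then v * x$j else 0)"
          by (rule sum.cong) auto
        then show "(\<Sum>j\<in>UNIV. (if i = j then v else 0) * x$j) = v * x$i" by simp
      qed
      then show ?thesis by (simp add: vec_eq_iff matrix_vector_mult_def mat_nth)
    qed
    show ?thesis unfolding Y matrix_vector_mult_add_rdistrib mv ..
  qed
  ultimately have "(\<Sum>i\<in>UNIV. cnj (x$i) * ((N ** cadj N) *v x)$i) + v * (\<Sum>i\<in>UNIV. cnj (x$i) * x$i) = 0"
    by (simp add: distrib_left sum.distrib sum_distrib_left mult_ac)
  then have eq: "(\<Sum>k\<in>UNIV. cnj (y$k) * y$k) + v * (\<Sum>i\<in>UNIV. cnj (x$i) * x$i) = 0"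
    unfolding quad_form y_def .
  define S where "S = (\<Sum>k\<in>UNIV. (cmod (y$k))^2)"
  define T where "T = (\<Sum>k\<in>UNIV. (cmod (x$k))^2)"
  have cm: "\<And>w::complex. cnj w * w = complex_of_real ((cmod w)^2)"
    by (simp add: complex_mult_cnj cmod_def mult.commute)
  have eq2: "complex_of_real S + v * complex_of_real T = 0"
    using eq unfolding S_def T_def cm by simp
  have "S \<ge> 0" unfolding S_def by (simp add: sum_nonneg)
  have "T > 0"
  proof -
    obtain i where "x$i \<noteq> 0" using x(1) by (metis vec_eq_iff zero_index)
    then have "(cmod (x$i))^2 > 0" by simp
    moreover have "(cmod (x$i))^2 \<le> T" unfolding T_def
      by (rule member_le_sum) auto
    ultimately show ?thesis by linarith
  qed
  have "v = - complex_of_real (S / T)"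
    using eq2 \<open>T > 0\<close> by (simp add: field_simps) (metis add.commute add_eq_0_iff2 mult.commute of_real_mult)
  then show ?thesis using \<open>S \<ge> 0\<close> \<open>T > 0\<close> by (intro exI[of _ "S/T"]) simp
qed

lemma factor:
  fixes A :: "complex^'n^'n"
  obtains c :: complex and d :: nat and lam :: "nat \<Rightarrow> real" where "c \<noteq> 0" "\<And>i. i<d \<Longrightarrow> lam i \<ge> 0"
    "\<And>v. det (Y0 A z + mat v) = c * (\<Prod>i<d. v + of_real (lam i))"
proof -
  define p where "p = detpoly (Y0 A z)"
  have pv: "\<And>v. poly p v = det (Y0 A z + mat v)" unfolding p_def poly_detpoly ..
  have "poly p 1 \<noteq> 0"
  proof
    assume "poly p 1 = 0"
    then obtain r where "r \<ge> 0" "(1::complex) = - of_real r" using Y0_sing pv by metis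
    then have "Re (1::complex) = - r" by (metis Re_complex_of_real uminus_complex.sel(1))
    then show False using \<open>r \<ge> 0\<close> by simp
  qed
  then have p0: "p \<noteq> 0" by auto
  obtain root where rt: "smult (lead_coeff p) (\<Prod>i<degree p. [:-root i, 1:]) = p"
    using complex_poly_decompose' by blast
  have pe: "\<And>v. poly p v = lead_coeff p * (\<Prod>i<degree p. v - root i)"
    by (subst rt[symmetric]) (simp add: poly_prod)
  have "\<And>i. i < degree p \<Longrightarrow> \<exists>r\<ge>0. root i = - of_real r"
  proof -
    fix i assume "i < degree p"
    then have "poly p (root i) = 0" unfolding pe by (auto intro!: prod_zero)
    then show "\<exists>r\<ge>0. root i = - of_real r" using Y0_sing pv by metis
  qed
  then obtain r where r: "\<And>i. i < degree p \<Longrightarrow> r i \<ge> 0 \<and> root i = - of_real (r i)" by metis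
  show ?thesis
  proof (rule that[of "lead_coeff p" "degree p" r])
    show "lead_coeff p \<noteq> 0" using p0 by simp
    show "\<And>i. i < degree p \<Longrightarrow> 0 \<le> r i" using r by blast
    fix v
    have "(\<Prod>i<degree p. v - root i) = (\<Prod>i<degree p. v + of_real (r i))"
      by (rule prod.cong) (auto simp: r)
    then show "det (Y0 A z + mat v) = lead_coeff p * (\<Prod>i<degree p. v + of_real (r i))"
      using pe pv by simp
  qed
qed

lemma trace_formula:
  fixes M :: "complex^'n^'n" and lam :: "nat \<Rightarrow> real"
  assumes P: "\<And>v. det (M + mat v) = c * (\<Prod>i<d. v + of_real (lam i))"
    and nz: "det (M + mat v) \<noteq> 0"
  shows "trace (matrix_inv (M + mat v)) = (\<Sum>i<d. 1 / (v + of_real (lam i)))"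
proof -
  have fz: "\<And>i. i < d \<Longrightarrow> v + of_real (lam i) \<noteq> 0" using nz P by auto
  have c0: "c \<noteq> 0" using nz P by auto
  have D1: "((\<lambda>v. det (M + mat v)) has_field_derivative (trace (matrix_inv (M + mat v)) * det (M + mat v))) (at v)"
    by (rule trace_inv_deriv[OF nz])
  have "((\<lambda>w. \<Prod>i\<in>{..<d}. w + of_real (lam i)) has_field_derivative
     ((\<Prod>i\<in>{..<d}. v + of_real (lam i)) * (\<Sum>i\<in>{..<d}. 1 / (v + of_real (lam i))))) (at v)"
  proof -
    have hd: "\<And>x. x \<in> {..<d} \<Longrightarrow> ((\<lambda>w. w + of_real (lam x)) has_field_derivative 1) (at v)"
      by (auto intro!: derivative_eq_intros)
    show ?thesis using has_field_derivative_prod'[of "{..<d}" "\<lambda>i w. w + of_real (lam i)" v "\<lambda>i. 1", OF _ hd] fz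
      by simp
  qed
  then have D2: "((\<lambda>v. det (M + mat v)) has_field_derivative
     (c * ((\<Prod>i\<in>{..<d}. v + of_real (lam i)) * (\<Sum>i\<in>{..<d}. 1 / (v + of_real (lam i)))))) (at v)"
    unfolding P by (rule DERIV_cmult)
  have "trace (matrix_inv (M + mat v)) * det (M + mat v) = c * ((\<Prod>i\<in>{..<d}. v + of_real (lam i)) * (\<Sum>i\<in>{..<d}. 1 / (v + of_real (lam i))))"
    using DERIV_unique[OF D1 D2] .
  also have "\<dots> = det (M + mat v) * (\<Sum>i\<in>{..<d}. 1 / (v + of_real (lam i)))"
    unfolding P by simp
  finally show ?thesis using nz by (simp add: mult.commute)
qed

lemma local_real:
  fixes a u k :: real
  assumes au: "a \<ge> u^2" and u: "u > 0" and k: "0 < k" "k < u/4"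
  shows "ln (sqrt ((a - k^2)^2 + (2*u*k)^2)) - ln a > - (k^2/a)"
proof -
  have a0: "a > 0" using au u using u by (smt (verit) zero_less_power)
  have k2: "k^2 < u^2/16"
  proof -
    have "k^2 < (u/4)^2" using k by (intro power_strict_mono) auto
    then show ?thesis by (simp add: power_divide)
  qed
  define e where "e = ((a - k^2)^2 + (2*u*k)^2)/a^2 - 1"
  have e_eq: "e = k^2 * (k^2 - 2*a + 4*u^2) / a^2"
    unfolding e_def using a0 by (simp add: field_simps power2_eq_square)
  have b1: "\<bar>k^2 - 2*a + 4*u^2\<bar> \<le> 5*a" unfolding abs_le_iff using k2 au a0 zero_le_power2[of k] by linarith
  have ka: "k^2/a \<le> 1/16" using k2 au a0 by (simp add: field_simps)
  have ea: "\<bar>e\<bar> \<le> 5 * (k^2/a)"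
  proof -
    have "\<bar>e\<bar> = k^2 * \<bar>k^2 - 2*a + 4*u^2\<bar> / a^2" unfolding e_eq by (simp add: abs_mult)
    also have "\<dots> \<le> k^2 * (5*a) / a^2"
      using b1 a0 by (intro divide_right_mono mult_left_mono) auto
    also have "\<dots> = 5 * (k^2/a)" using a0 by (simp add: field_simps power2_eq_square)
    finally show ?thesis .
  qed
  have eh: "\<bar>e\<bar> \<le> 1/2" using ea ka by linarith
  have lnb: "ln (1 + e) \<ge> e - 2 * e^2" using abs_ln_one_plus_x_minus_x_bound[OF eh] by linarith
  have e2: "e^2 \<le> 25 * (k^2/a)^2"
  proof -
    have "e^2 = \<bar>e\<bar>^2" by simp
    also have "\<dots> \<le> (5 * (k^2/a))^2" using ea by (intro power_mono) auto
    also have "(5 * (k^2/a))^2 = 25 * (k^2/a)^2" by (simp add: power2_eq_square)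
    finally show ?thesis .
  qed
  have e_eq2: "e = (k^2/a)^2 - 2*(k^2/a) + 4*u^2*k^2/a^2"
    unfolding e_eq using a0 by (simp add: field_simps power2_eq_square)
  have key: "4*u^2*k^2/a^2 > 49 * (k^2/a)^2"
  proof -
    have "49 * (k^2/a)^2 = 49 * k^2 * k^2 / a^2" by (simp add: power2_eq_square)
    also have "\<dots> < 4*u^2*k^2/a^2"
    proof -
      have "49 * k^2 < 4 * u^2" using k2 zero_le_power2[of k] by linarith
      then have "49 * k^2 * k^2 < 4*u^2*k^2" using k by (intro mult_strict_right_mono) auto
      then show ?thesis using a0 by (intro divide_strict_right_mono) auto
    qed
    finally show ?thesis .
  qed
  have lb: "ln (1 + e) > - 2 * (k^2/a)" using lnb e2 e_eq2 key by linarith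
  have Q: "(a - k^2)^2 + (2*u*k)^2 = a^2 * (1 + e)" unfolding e_def using a0 by (simp add: field_simps)
  have e1: "1 + e > 0" using eh by linarith
  have "ln (sqrt ((a - k^2)^2 + (2*u*k)^2)) = ln ((a - k^2)^2 + (2*u*k)^2) / 2"
    using Q e1 a0 by (intro ln_sqrt) simp
  also have "\<dots> = (ln (a^2) + ln (1+e)) / 2" unfolding Q using a0 e1 by (simp add: ln_mult)
  also have "\<dots> = ln a + ln (1+e)/2" using a0 by (simp add: ln_realpow)
  finally have "ln (sqrt ((a - k^2)^2 + (2*u*k)^2)) = ln a + ln (1+e)/2" .
  moreover have "ln (1+e)/2 > - (k^2/a)"
  proof -
    have gen: "\<And>L r::real. L > -2*r \<Longrightarrow> L/2 > -r" by linarith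
    show ?thesis by (rule gen[OF lb])
  qed
  ultimately show ?thesis by (simp only:)
qed

lemma arg_ge:
  assumes "Re t > 0" "Im t \<ge> Re t"
  shows "Arg t \<ge> pi/4"
proof -
  have "Im t / Re t \<ge> 1" using assms by (simp add: le_divide_eq)
  then have "arctan (Im t / Re t) \<ge> arctan 1" by (rule arctan_monotone')
  then have "arctan (Im t / Re t) \<ge> pi/4" unfolding arctan_one .
  then show ?thesis using arg_conv_arctan[OF assms(1)] by simp
qed

definition Pf :: "complex \<Rightarrow> nat \<Rightarrow> (nat \<Rightarrow> real) \<Rightarrow> complex \<Rightarrow> complex" where
  "Pf c d lam v = c * (\<Prod>i<d. v + of_real (lam i))"

lemma Pf_norm: "cmod (Pf c d lam (Complex A (-B))) = cmod c * (\<Prod>i<d. sqrt ((A + lam i)^2 + B^2))"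
proof -
  have "\<And>i. cmod (Complex A (-B) + of_real (lam i)) = sqrt ((A + lam i)^2 + B^2)"
    by (simp add: cmod_def)
  then show ?thesis unfolding Pf_def norm_mult prod_norm[symmetric] by simp
qed

lemma Pf_mono:
  assumes "0 \<le> B'" "B' \<le> B"
  shows "cmod (Pf c d lam (Complex A (-B'))) \<le> cmod (Pf c d lam (Complex A (-B)))"
proof -
  have "\<And>i. sqrt ((A + lam i)^2 + B'^2) \<le> sqrt ((A + lam i)^2 + B^2)"
    using assms by (intro real_sqrt_le_mono add_left_mono power_mono) auto
  then have "(\<Prod>i<d. sqrt ((A + lam i)^2 + B'^2)) \<le> (\<Prod>i<d. sqrt ((A + lam i)^2 + B^2))"
    by (intro prod_mono) auto
  then show ?thesis unfolding Pf_norm by (intro mult_left_mono) auto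
qed

lemma Pf_lower:
  assumes "0 \<le> B"
  shows "cmod c * B^d \<le> cmod (Pf c d lam (Complex A (-B)))"
proof -
  have "(\<Prod>i<d. B) \<le> (\<Prod>i<d. sqrt ((A + lam i)^2 + B^2))"
  proof (intro prod_mono conjI)
    fix i
    show "0 \<le> B" by (rule assms)
    have "B^2 \<le> (A + lam i)^2 + B^2" by simp
    then show "B \<le> sqrt ((A + lam i)^2 + B^2)" by (rule real_le_rsqrt)
  qed
  then show ?thesis unfolding Pf_norm by (intro mult_left_mono) auto
qed

lemma Pf_nz:
  assumes "\<And>i. i < d \<Longrightarrow> lam i \<ge> 0" "c \<noteq> 0" "B \<noteq> 0 \<or> A > 0"
  shows "Pf c d lam (Complex A B) \<noteq> 0"
proof -
  have "\<And>i. i < d \<Longrightarrow> Complex A B + of_real (lam i) \<noteq> 0"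
  proof
    fix i assume i: "i < d" and "Complex A B + of_real (lam i) = 0"
    then have "A + lam i = 0" "B = 0" by (simp_all add: complex_eq_iff)
    then show False using assms(1)[OF i] assms(3) by auto
  qed
  then show ?thesis unfolding Pf_def using assms(2) by auto
qed

lemma seg_pt:
  fixes p q w :: complex
  assumes "w \<in> closed_segment p q"
  shows "\<exists>s. 0 \<le> s \<and> s \<le> 1 \<and> Re w = Re p + s * (Re q - Re p) \<and> Im w = Im p + s * (Im q - Im p)"
proof -
  obtain s where s: "0 \<le> s" "s \<le> 1" "w = (1 - s) *\<^sub>R p + s *\<^sub>R q" using assms in_segment(1) by blast
  have "Re w = (1 - s) * Re p + s * Re q" "Im w = (1 - s) * Im p + s * Im q" using s(3) by simp_all
  then show ?thesis using s(1,2) by (intro exI[of _ s]) (simp add: algebra_simps)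
qed

lemma seg_between:
  fixes a b s :: real
  assumes "0 \<le> s" "s \<le> 1" "a \<le> b"
  shows "a \<le> a + s * (b - a)" "a + s * (b - a) \<le> b"
proof -
  have "0 \<le> s * (b - a)" using assms by simp
  then show "a \<le> a + s * (b - a)" by simp
  have "s * (b - a) \<le> 1 * (b - a)" using assms by (intro mult_right_mono) auto
  then show "a + s * (b - a) \<le> b" by simp
qed

lemma ln_mono_pos: "(x::real) > 0 \<Longrightarrow> x \<le> y \<Longrightarrow> ln x \<le> ln y"
  by simp

lemma ln_mult_pos: "(x::real) > 0 \<Longrightarrow> y > 0 \<Longrightarrow> ln (x*y) = ln x + ln y"
  by (simp add: ln_mult)

lemma neg_Complex [simp]: "- Complex a b = Complex (-a) (-b)"
  by (simp add: complex_eq_iff)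

lemma Complex_sq: "(Complex x y)^2 = Complex (x^2 - y^2) (2*x*y)"
  by (simp add: complex_eq_iff power2_eq_square)

lemma csqrt_props:
  assumes "Re w < 0" "Im w > 0"
  shows "(csqrt w)^2 = w" "Re (csqrt w) > 0" "Im (csqrt w) \<ge> Re (csqrt w)"
proof -
  show sq: "(csqrt w)^2 = w" by simp
  obtain x y where xy: "csqrt w = Complex x y" by (metis complex.exhaust)
  have w: "w = Complex (x^2 - y^2) (2*x*y)" using sq unfolding xy Complex_sq by simp
  have "x \<ge> 0" using Re_csqrt[of w] xy by simp
  moreover have "x \<noteq> 0"
  proof
    assume "x = 0" then have "Im w = 0" using w by simp
    then show False using assms(2) by simp
  qed
  ultimately show "Re (csqrt w) > 0" using xy by simp
  have "x^2 < y^2" using w assms(1) by simp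
  moreover have "y > 0" using w assms(2) \<open>x \<ge> 0\<close> by (simp add: zero_less_mult_iff)
  ultimately have "x < y" by (intro power_less_imp_less_base[of x 2 y]) auto
  then show "Im (csqrt w) \<ge> Re (csqrt w)" using xy by simp
qed


theorem lemma1:
  fixes A0 :: "complex^'n^'n" and z :: complex and ustar :: real
  assumes upos: "ustar > 0"
    and usol: "trace (Gres A0 z (complex_of_real (ustar^2))) / of_nat CARD('n) = 1"
  shows "\<exists>\<kappa>0>0. \<forall>\<kappa>. 0 < \<kappa> \<and> \<kappa> < \<kappa>0 \<longrightarrow> \<kappa> < ustar \<and>
           (\<exists>C1. \<forall>C0::real. C0 \<ge> C1 \<and>
               (det (Y0 A0 z) = 0 \<or> ln (C0^2) > ln (cmod (det (Y0 A0 z))) / real CARD('n) + 2)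
             \<longrightarrow> (\<exists>g. valid_path g \<and>
                    path_image g \<subseteq> {t. Re t > 0 \<and> Arg t \<ge> pi/4} \<and>
                    \<i> * complex_of_real ustar + complex_of_real \<kappa> \<in> path_image g \<and>
                    \<i> * complex_of_real C0 + complex_of_real C0 \<in> path_image g \<and>
                    (\<exists>\<sigma>>0. \<forall>t\<in>path_image g.
                        ReFt A0 z t \<le> ReFt A0 z (\<i> * complex_of_real ustar) - \<sigma>)))"
proof -
  define n where "n = real CARD('n)"
  have n0: "n > 0" unfolding n_def by simp
  obtain c :: complex and d :: nat and lam :: "nat \<Rightarrow> real" where c0: "c \<noteq> 0" and lam0: "\<And>i. i<d \<Longrightarrow> lam i \<ge> 0"
    and Pdef: "\<And>v. det (Y0 A0 z + mat v) = c * (\<Prod>i<d. v + of_real (lam i))"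
  proof (rule factor[of A0 z])
    fix c :: complex and d :: nat and lam :: "nat \<Rightarrow> real" assume "c \<noteq> 0" "\<And>i. i<d \<Longrightarrow> lam i \<ge> 0" "\<And>v. det (Y0 A0 z + mat v) = c * (\<Prod>i<d. v + of_real (lam i))"
    then show thesis by (rule that)
  qed
  have PF: "\<And>v. det (Y0 A0 z + mat v) = Pf c d lam v" using Pdef unfolding Pf_def by simp
  define F where "F = ReFt A0 z"
  have F_eq: "\<And>t. F t = - (ln (cmod (Pf c d lam (- (t^2)))) / n) - Re (t^2)"
    unfolding F_def ReFt_def ReLn_def PF n_def by simp
  define u where "u = ustar"
  have u0: "u > 0" using upos u_def by simp
  have nzu: "det (Y0 A0 z + mat (complex_of_real (u^2))) \<noteq> 0"
  proof
    assume "det (Y0 A0 z + mat (complex_of_real (u^2))) = 0"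
    then obtain r where r: "r \<ge> 0" "complex_of_real (u^2) = - of_real r" using Y0_sing by blast
    then have "u^2 = - r" by (metis of_real_eq_iff of_real_minus)
    moreover have "u^2 > 0" using u0 by simp
    ultimately show False using r by linarith
  qed
  have tr: "trace (Gres A0 z (complex_of_real (u^2))) = of_nat CARD('n)"
    using usol unfolding u_def by (simp add: divide_eq_1_iff)
  have "trace (Gres A0 z (complex_of_real (u^2))) = (\<Sum>i<d. 1 / (complex_of_real (u^2) + of_real (lam i)))"
    unfolding Gres_def by (rule trace_formula[OF Pdef nzu])
  also have "\<dots> = complex_of_real (\<Sum>i<d. 1 / (u^2 + lam i))" by simp
  finally have "complex_of_real (\<Sum>i<d. 1 / (u^2 + lam i)) = complex_of_real n"
    using tr unfolding n_def by simp
  then have S: "(\<Sum>i<d. 1 / (u^2 + lam i)) = n" using of_real_eq_iff by blast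
  have d0: "d > 0"
  proof (rule ccontr)
    assume "\<not> d > 0" then have "d = 0" by simp
    then show False using S n0 by simp
  qed
  show ?thesis
  proof (rule exI[of _ "u/4"], intro conjI allI impI)
    show "u/4 > 0" using u0 by simp
    fix k :: real assume k: "0 < k \<and> k < u/4"
    then show "k < ustar" using u0 u_def by simp
    define c1 where "c1 = u^2 - k^2"
    define B0 where "B0 = 2*u*k"
    have B00: "B0 > 0" unfolding B0_def using u0 k by simp
    have c10: "c1 > 0"
    proof -
      have "k^2 < u^2" using k u0 by (intro power_strict_mono) auto
      then show ?thesis unfolding c1_def by simp
    qed
    define F1 where "F1 = F (\<i> * complex_of_real ustar + complex_of_real k)"
    have pt1: "\<i> * complex_of_real ustar + complex_of_real k = Complex k u"
      unfolding u_def by (simp add: complex_eq_iff)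
    have F1_eq: "F1 = - (ln (cmod (Pf c d lam (Complex c1 (-B0)))) / n) + c1"
    proof -
      have "(Complex k u)^2 = Complex (-c1) B0" unfolding Complex_sq c1_def B0_def by simp
      then show ?thesis unfolding F1_def pt1 F_eq by simp
    qed
    have F0_eq: "F (\<i> * complex_of_real ustar) = - (ln (cmod (Pf c d lam (Complex (u^2) (-0)))) / n) + u^2"
    proof -
      have "(\<i> * complex_of_real ustar)^2 = Complex (-(u^2)) 0" unfolding u_def by (simp add: complex_eq_iff power2_eq_square)
      then show ?thesis unfolding F_eq by simp
    qed
    have loc: "ln (cmod (Pf c d lam (Complex c1 (-B0)))) - ln (cmod (Pf c d lam (Complex (u^2) (-0)))) > - (k^2 * n)"
    proof -
      have sp: "\<And>A B i. i < d \<Longrightarrow> A > 0 \<Longrightarrow> sqrt ((A + lam i)^2 + B^2) > 0"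
      proof -
        fix A B :: real and i assume i: "i < d" and A: "A > 0"
        have "A + lam i > 0" using lam0[OF i] A by linarith
        then have "(A + lam i)^2 > 0" by simp
        then have "(A + lam i)^2 + B^2 > 0" using zero_le_power2[of B] by linarith
        then show "sqrt ((A + lam i)^2 + B^2) > 0" by simp
      qed
      have lnP: "\<And>A B. A > 0 \<Longrightarrow> ln (cmod (Pf c d lam (Complex A (-B)))) = ln (cmod c) + (\<Sum>i<d. ln (sqrt ((A + lam i)^2 + B^2)))"
      proof -
        fix A B :: real assume A: "A > 0"
        have "ln (cmod (Pf c d lam (Complex A (-B)))) = ln (cmod c * (\<Prod>i<d. sqrt ((A + lam i)^2 + B^2)))"
          unfolding Pf_norm ..
        also have "\<dots> = ln (cmod c) + ln (\<Prod>i<d. sqrt ((A + lam i)^2 + B^2))"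
        proof -
          have "(\<Prod>i<d. sqrt ((A + lam i)^2 + B^2)) > 0" using sp[OF _ A] by (intro prod_pos) auto
          then show ?thesis using c0 by (intro ln_mult_pos) auto
        qed
        also have "ln (\<Prod>i<d. sqrt ((A + lam i)^2 + B^2)) = (\<Sum>i<d. ln (sqrt ((A + lam i)^2 + B^2)))"
        proof (rule ln_prod)
          fix i assume "i \<in> {..<d}"
          then have "sqrt ((A + lam i)^2 + B^2) > 0" using sp[OF _ A, of i] by simp
          then show "sqrt ((A + lam i)^2 + B^2) \<noteq> 0" by linarith
        qed simp
        finally show "ln (cmod (Pf c d lam (Complex A (-B)))) = ln (cmod c) + (\<Sum>i<d. ln (sqrt ((A + lam i)^2 + B^2)))" .
      qed
      have trm: "\<And>i. i < d \<Longrightarrow> ln (sqrt ((c1 + lam i)^2 + B0^2)) - ln (sqrt ((u^2 + lam i)^2 + 0^2)) > - (k^2 / (u^2 + lam i))"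
      proof -
        fix i assume i: "i < d"
        have a: "u^2 + lam i \<ge> u^2" using lam0[OF i] by simp
        have "u^2 > 0" using u0 by simp
        then have "u^2 + lam i > 0" using lam0[OF i] by linarith
        then have e2: "sqrt ((u^2 + lam i)^2 + 0^2) = u^2 + lam i" by simp
        have e1: "c1 + lam i = (u^2 + lam i) - k^2" unfolding c1_def by simp
        have lr: "ln (sqrt (((u^2 + lam i) - k^2)^2 + (2*u*k)^2)) - ln (u^2 + lam i) > - (k^2 / (u^2 + lam i))"
          using local_real[OF a u0, of k] k by simp
        show "ln (sqrt ((c1 + lam i)^2 + B0^2)) - ln (sqrt ((u^2 + lam i)^2 + 0^2)) > - (k^2 / (u^2 + lam i))"
          unfolding e1 e2 B0_def by (rule lr)
      qed
      have "(\<Sum>i<d. - (k^2 / (u^2 + lam i))) < (\<Sum>i<d. ln (sqrt ((c1 + lam i)^2 + B0^2)) - ln (sqrt ((u^2 + lam i)^2 + 0^2)))"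
        using d0 trm by (intro sum_strict_mono) auto
      also have "(\<Sum>i<d. - (k^2 / (u^2 + lam i))) = - (k^2 * n)"
        using S by (simp add: sum_negf sum_divide_distrib[symmetric] sum_distrib_left[symmetric] divide_inverse)
      finally show ?thesis
        using lnP[OF c10, of B0] lnP[of "u^2" 0] u0 by (simp add: sum_subtractf)
    qed
    have F1_lt: "F1 < F (\<i> * complex_of_real ustar)"
    proof -
      have "(ln (cmod (Pf c d lam (Complex c1 (-B0)))) - ln (cmod (Pf c d lam (Complex (u^2) (-0))))) / n > - (k^2 * n) / n"
        using loc n0 by (intro divide_strict_right_mono) auto
      then have "(ln (cmod (Pf c d lam (Complex c1 (-B0)))) - ln (cmod (Pf c d lam (Complex (u^2) (-0))))) / n > - (k^2)"
        using n0 by simp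
      then show ?thesis unfolding F1_eq F0_eq c1_def by (simp add: diff_divide_distrib)
    qed
    define \<sigma> where "\<sigma> = F (\<i> * complex_of_real ustar) - F1"
    have \<sigma>0: "\<sigma> > 0" unfolding \<sigma>_def using F1_lt by simp
    define K where "K = max 0 (n * (c1 - F1) - ln (cmod c))"
    show "\<exists>C1. \<forall>C0::real. C0 \<ge> C1 \<and>
               (det (Y0 A0 z) = 0 \<or> ln (C0^2) > ln (cmod (det (Y0 A0 z))) / real CARD('n) + 2)
             \<longrightarrow> (\<exists>g. valid_path g \<and>
                    path_image g \<subseteq> {t. Re t > 0 \<and> Arg t \<ge> pi/4} \<and>
                    \<i> * complex_of_real ustar + complex_of_real k \<in> path_image g \<and>
                    \<i> * complex_of_real C0 + complex_of_real C0 \<in> path_image g \<and>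
                    (\<exists>\<sigma>>0. \<forall>t\<in>path_image g.
                        ReFt A0 z t \<le> ReFt A0 z (\<i> * complex_of_real ustar) - \<sigma>))"
    proof (intro exI[of _ "max (max (sqrt (c1 + 1)) (exp K)) B0"] allI impI)
      fix C0 :: real
      assume "max (max (sqrt (c1 + 1)) (exp K)) B0 \<le> C0 \<and> (det (Y0 A0 z) = 0 \<or> ln (C0^2) > ln (cmod (det (Y0 A0 z))) / real CARD('n) + 2)"
      then have C0a: "sqrt (c1 + 1) \<le> C0" and C0b: "exp K \<le> C0" and C0c: "B0 \<le> C0" by auto
      have C0p: "C0 > 0" using C0b exp_gt_zero[of K] by linarith
      have C0sq: "C0^2 \<ge> c1 + 1"
      proof -
        have "(sqrt (c1 + 1))^2 \<le> C0^2" using C0a c10 by (intro power_mono) auto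
        then show ?thesis using c10 by simp
      qed
      define X where "X = sqrt (C0^2 - c1)"
      have X1: "X \<ge> 1" unfolding X_def using C0sq by simp
      have X2: "X^2 = C0^2 - c1" unfolding X_def using C0sq c10 by simp
      have XC: "X \<le> C0"
      proof -
        have "X^2 \<le> C0^2" using X2 c10 by simp
        then show ?thesis using C0p by (simp add: power2_le_iff_abs_le)
      qed
      define B1 where "B1 = 2 * X * C0"
      have B01: "B0 \<le> B1"
      proof -
        have "1 * C0 \<le> X * C0" using X1 C0p by (intro mult_right_mono) auto
        then show ?thesis unfolding B1_def using C0c C0p by linarith
      qed
      define g1 where "g1 = csqrt \<circ> linepath (Complex (-c1) B0) (Complex (-c1) B1)"
      define g2 where "g2 = linepath (Complex X C0) (Complex C0 C0)"
      have seg1: "\<And>w. w \<in> closed_segment (Complex (-c1) B0) (Complex (-c1) B1) \<Longrightarrow> Re w = -c1 \<and> B0 \<le> Im w"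
      proof -
        fix w assume "w \<in> closed_segment (Complex (-c1) B0) (Complex (-c1) B1)"
        then obtain s where s: "0 \<le> s" "s \<le> 1" "Re w = -c1" "Im w = B0 + s * (B1 - B0)"
          using seg_pt by fastforce
        then show "Re w = -c1 \<and> B0 \<le> Im w" using seg_between[OF s(1,2) B01] by simp
      qed
      have sub1: "closed_segment (Complex (-c1) B0) (Complex (-c1) B1) \<subseteq> - \<real>\<^sub>\<le>\<^sub>0"
      proof
        fix w assume "w \<in> closed_segment (Complex (-c1) B0) (Complex (-c1) B1)"
        then have "Im w > 0" using seg1 B00 by force
        then show "w \<in> - \<real>\<^sub>\<le>\<^sub>0" by (auto simp: complex_nonpos_Reals_iff)
      qed
      have vg1: "valid_path g1" unfolding g1_def
        by (rule valid_path_compose_holomorphic[OF valid_path_linepath holomorphic_on_csqrt])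
           (use sub1 in auto)
      have sq1: "(Complex X C0)^2 = Complex (-c1) B1" unfolding Complex_sq B1_def using X2 by simp
      have fin1: "pathfinish g1 = Complex X C0" unfolding g1_def pathfinish_compose
        using sq1 X1 by (auto intro!: csqrt_unique)
      have sq0: "(Complex k u)^2 = Complex (-c1) B0" unfolding Complex_sq c1_def B0_def by simp
      have st1: "pathstart g1 = Complex k u" unfolding g1_def pathstart_compose
        using sq0 k by (auto intro!: csqrt_unique)
      have vg: "valid_path (g1 +++ g2)"
        using vg1 fin1 unfolding g2_def by (intro valid_path_join) auto
      have pim: "path_image (g1 +++ g2) = path_image g1 \<union> path_image g2"
        using fin1 unfolding g2_def by (intro path_image_join) auto
      have P1: "\<And>t. t \<in> path_image g1 \<Longrightarrow> Re t > 0 \<and> Im t \<ge> Re t \<and> F t \<le> F1"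
      proof -
        fix t assume "t \<in> path_image g1"
        then obtain w where w: "w \<in> closed_segment (Complex (-c1) B0) (Complex (-c1) B1)" "t = csqrt w"
          unfolding g1_def path_image_compose by auto
        have wr: "Re w = -c1" "B0 \<le> Im w" using seg1[OF w(1)] by auto
        have props: "t^2 = w" "Re t > 0" "Im t \<ge> Re t" using csqrt_props[of w] wr c10 B00 w(2) by auto
        have mw: "- (t^2) = Complex c1 (- Im w)" using props(1) wr by (simp add: complex_eq_iff)
        have "cmod (Pf c d lam (Complex c1 (-B0))) \<le> cmod (Pf c d lam (Complex c1 (- Im w)))"
          using wr B00 by (intro Pf_mono) auto
        moreover have "cmod (Pf c d lam (Complex c1 (-B0))) > 0"
          using Pf_nz[OF lam0 c0, where B="-B0" and A=c1] B00 by simp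
        ultimately have "ln (cmod (Pf c d lam (Complex c1 (-B0)))) \<le> ln (cmod (Pf c d lam (Complex c1 (- Im w))))"
          by (intro ln_mono_pos)
        then have "F t \<le> F1" unfolding F_eq F1_eq mw using props(1) wr n0
          by (simp add: divide_right_mono)
        then show "Re t > 0 \<and> Im t \<ge> Re t \<and> F t \<le> F1" using props by simp
      qed
      have P2: "\<And>t. t \<in> path_image g2 \<Longrightarrow> Re t > 0 \<and> Im t \<ge> Re t \<and> F t \<le> F1"
      proof -
        fix t assume "t \<in> path_image g2"
        then have "t \<in> closed_segment (Complex X C0) (Complex C0 C0)" unfolding g2_def by simp
        then obtain s where s: "0 \<le> s" "s \<le> 1" "Re t = X + s * (C0 - X)" "Im t = C0"
          using seg_pt by fastforce
        define x where "x = Re t"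
        have x: "X \<le> x" "x \<le> C0" unfolding x_def using seg_between[OF s(1,2) XC] s by auto
        have tt: "t = Complex x C0" unfolding x_def using s by (simp add: complex_eq_iff)
        have mt: "- (t^2) = Complex (C0^2 - x^2) (- (2*x*C0))" unfolding tt Complex_sq by (simp add: complex_eq_iff)
        have ret: "- Re (t^2) \<le> c1"
        proof -
          have "X^2 \<le> x^2" using x X1 by (intro power_mono) auto
          then show ?thesis unfolding tt Complex_sq using X2 by simp
        qed
        have bx: "2*x*C0 \<ge> C0"
        proof -
          have "1 * C0 \<le> x * C0" using x X1 C0p by (intro mult_right_mono) auto
          then show ?thesis using C0p by linarith
        qed
        have "K \<ge> 0" unfolding K_def by simp
        then have "exp K \<ge> 1" by simp
        then have b1: "2*x*C0 \<ge> 1" using bx C0b by linarith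
        have "cmod c * (2*x*C0)^d \<le> cmod (Pf c d lam (- (t^2)))"
          unfolding mt using b1 by (intro Pf_lower) linarith
        moreover have "(2*x*C0) \<le> (2*x*C0)^d"
          using power_increasing[of 1 d "2*x*C0"] d0 b1 by simp
        ultimately have "cmod c * C0 \<le> cmod (Pf c d lam (- (t^2)))"
        proof -
          have "cmod c * C0 \<le> cmod c * (2*x*C0)" using bx by (intro mult_left_mono) auto
          also have "\<dots> \<le> cmod c * (2*x*C0)^d" using \<open>(2*x*C0) \<le> (2*x*C0)^d\<close> by (intro mult_left_mono) auto
          finally show ?thesis using \<open>cmod c * (2*x*C0)^d \<le> cmod (Pf c d lam (- (t^2)))\<close> by linarith
        qed
        moreover have "cmod c * exp K \<le> cmod c * C0" using C0b by (simp add: mult_left_mono)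
        ultimately have le: "cmod c * exp K \<le> cmod (Pf c d lam (- (t^2)))" by simp
        have "ln (cmod c * exp K) = ln (cmod c) + K" using c0 by (simp add: ln_mult)
        also have "\<dots> \<ge> n * (c1 - F1)" unfolding K_def by simp
        finally have "n * (c1 - F1) \<le> ln (cmod c * exp K)" .
        also have "ln (cmod c * exp K) \<le> ln (cmod (Pf c d lam (- (t^2))))"
          using le c0 by (intro ln_mono_pos) auto
        finally have "n * (c1 - F1) \<le> ln (cmod (Pf c d lam (- (t^2))))" .
        then have "c1 - F1 \<le> ln (cmod (Pf c d lam (- (t^2)))) / n" using n0 by (simp add: field_simps)
        then have "F t \<le> F1" unfolding F_eq using ret by simp
        moreover have "Re t > 0" using x X1 x_def by simp
        moreover have "Im t \<ge> Re t" using s x x_def by simp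
        ultimately show "Re t > 0 \<and> Im t \<ge> Re t \<and> F t \<le> F1" by simp
      qed
      show "\<exists>g. valid_path g \<and>
                    path_image g \<subseteq> {t. Re t > 0 \<and> Arg t \<ge> pi/4} \<and>
                    \<i> * complex_of_real ustar + complex_of_real k \<in> path_image g \<and>
                    \<i> * complex_of_real C0 + complex_of_real C0 \<in> path_image g \<and>
                    (\<exists>\<sigma>>0. \<forall>t\<in>path_image g.
                        ReFt A0 z t \<le> ReFt A0 z (\<i> * complex_of_real ustar) - \<sigma>)"
      proof (intro exI[of _ "g1 +++ g2"] conjI)
        show "valid_path (g1 +++ g2)" by (rule vg)
        show "path_image (g1 +++ g2) \<subseteq> {t. Re t > 0 \<and> Arg t \<ge> pi/4}"
          unfolding pim using P1 P2 arg_ge by blast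
        have "pathstart g1 \<in> path_image g1" by (rule pathstart_in_path_image)
        then show "\<i> * complex_of_real ustar + complex_of_real k \<in> path_image (g1 +++ g2)"
          unfolding pim st1 pt1 by simp
        have "pathfinish g2 \<in> path_image g2" by (rule pathfinish_in_path_image)
        moreover have "pathfinish g2 = \<i> * complex_of_real C0 + complex_of_real C0"
          unfolding g2_def by (simp add: complex_eq_iff)
        ultimately show "\<i> * complex_of_real C0 + complex_of_real C0 \<in> path_image (g1 +++ g2)"
          unfolding pim by simp
        show "\<exists>\<sigma>>0. \<forall>t\<in>path_image (g1 +++ g2). ReFt A0 z t \<le> ReFt A0 z (\<i> * complex_of_real ustar) - \<sigma>"
        proof (intro exI[of _ \<sigma>] conjI ballI)
          show "\<sigma> > 0" by (rule \<sigma>0)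
          fix t assume "t \<in> path_image (g1 +++ g2)"
          then have "F t \<le> F1" using P1 P2 unfolding pim by blast
          then show "ReFt A0 z t \<le> ReFt A0 z (\<i> * complex_of_real ustar) - \<sigma>"
            unfolding \<sigma>_def F_def F1_def by simp
        qed
      qed
    qed
  qed
qed

end
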